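(* Let $N\in\mathbb N$ and let $\Pi$ be a set of two-coloured partitions containing the four mixed-coloured pair partitions. Let $x=(x_1,\dots,x_N)^T$ be the generators of $C(X_N(\Pi))$ and $u=(u_{ij})$ the fundamental matrix of $G_N(\Pi)$. Then $x_i\mapsto u_{i1}$, $1\le i\le N$, defines a unital $*$-homomorphism $C(X_N(\Pi))\to C(G_N(\Pi))$.
   Context: $[n]:=\{1,\dots,n\}$; $[N]^0=\{\epsilon\}$. A two-coloured partition on $k$ upper and $l$ lower points is a partition of the $k$ upper and $l$ lower points (each row ordered left to right) into non-empty disjoint blocks, each point coloured $1$ (white) or $*$ (black); $\mathcal P(\omega,\omega')$ denotes those with upper colour word $\omega\in\{1,*\}^k$ and lower colour word $\omega'\in\{1,*\}^l$. A through-block contains upper and lower points; $tb(p)$ is their number. A row labeling (labels left to right in $[N]$) is valid if points of that row in a common block carry equal labels; $\epsilon$ is valid. Decomposition of labelings of $p$: $T_0$ (resp. $T'_0$) = invalid upper (resp. lower) row labelings; $r=N^{tb(p)}$; enumerate the assignments of labels in $[N]$ to the through-blocks as $1,\dots,r$; $T_i$ (resp. $T'_i$) = valid upper (resp. lower) row labelings giving each through-block the label of the $i$-th assignment. $a^1:=a$, $a^*$ = adjoint; empty products equal $\mathbb 1$. Mixed-coloured pair partitions: the four partitions consisting of a single block of two points of opposite colours, both in the upper row or both in the lower row. Relations $R^{Gr}_p(u)$ for an $N\times N$ matrix $u$ and $p\in\mathcal P(\omega,\omega')$: (i) $\sum_{t\in T_i}u_{t_1\gamma_1}^{\omega_1}\cdots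 u_{t_k\gamma_k}^{\omega_k}=\sum_{t'\in T'_j}u_{\gamma'_1t'_1}^{\omega'_1}\cdots u_{\gamma'_lt'_l}^{\omega'_l}$ for $1\le i,j\le r$, $\gamma\in T_j$, $\gamma'\in T'_i$; (ii) $\sum_{t\in T_i}u_{t_1\gamma_1}^{\omega_1}\cdots u_{t_k\gamma_k}^{\omega_k}=0$ for $\gamma\in T_0$, $1\le i\le r$; (iii) $\sum_{t'\in T'_j}u_{\gamma'_1t'_1}^{\omega'_1}\cdots u_{\gamma'_lt'_l}^{\omega'_l}=0$ for $\gamma'\in T'_0$, $1\le j\le r$. $C(G_N(\Pi))$ is the universal unital $C^*$-algebra generated by $u_{ij}$ ($1\le i,j\le N$) subject to $R^{Gr}_p(u)$ for all $p\in\Pi$ (easy quantum group $G_N(\Pi)$). Relations $R^{Sp}_p(x)$ for a vector $x=(x_1,\dots,x_N)$ and $p\in\mathcal P(\omega,\omega')$: $\sum_{t\in T_i}x_{t_1}^{\omega_1}\cdots x_{t_k}^{\omega_k}=\sum_{t'\in T'_i}x_{t'_1}^{\omega'_1}\cdots x_{t'_l}^{\omega'_l}$ for all $1\le i\le r$. $C(X_N(\Pi))$ is the universal unital $C^*$-algebra generated by $x_1,\dots,x_N$ subject to $R^{Sp}_p(x)$ for all $p\in\Pi$ (partition quantum space of one vector; it exists since the relations force $\sum_i x_ix_i^*=\mathbb 1$). *)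

theory Defs
  imports Complex_Main "HOL-Library.Disjoint_Sets" "HOL-Library.FuncSet"
begin

class unital_cstar_algebra = banach + real_normed_algebra_1 +
  fixes scaleC :: "complex \<Rightarrow> 'a \<Rightarrow> 'a"
  fixes adj :: "'a \<Rightarrow> 'a"
  assumes scaleC_add_right: "scaleC c (x + y) = scaleC c x + scaleC c y"
    and scaleC_add_left: "scaleC (c + d) x = scaleC c x + scaleC d x"
    and scaleC_scaleC: "scaleC c (scaleC d x) = scaleC (c * d) x"
    and scaleC_one: "scaleC 1 x = x"
    and scaleR_scaleC: "scaleR r x = scaleC (complex_of_real r) x"
    and norm_scaleC: "norm (scaleC c x) = cmod c * norm x"
    and scaleC_mult_left: "scaleC c (x * y) = scaleC c x * y"
    and scaleC_mult_right: "scaleC c (x * y) = x * scaleC c y"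
    and adj_adj: "adj (adj x) = x"
    and adj_add: "adj (x + y) = adj x + adj y"
    and adj_scaleC: "adj (scaleC c x) = scaleC (cnj c) (adj x)"
    and adj_mult: "adj (x * y) = adj y * adj x"
    and cstar_identity: "norm (adj x * x) = norm x * norm x"

datatype colour = White | Black

definition cpow :: "colour \<Rightarrow> 'a::unital_cstar_algebra \<Rightarrow> 'a" where
  "cpow c a = (case c of White \<Rightarrow> a | Black \<Rightarrow> adj a)"

text \<open>A two-coloured partition: upper colour word (length k), lower colour word (length l),
  and blocks on the points; upper point i (0-based) is Inl i, lower point j is Inr j.\<close>

datatype tcpart = TCP (up_col: "colour list") (lo_col: "colour list") (blocks: "(nat + nat) set set")

definition points :: "tcpart \<Rightarrow> (nat + nat) set" where
  "points p = Inl ` {..<length (up_col p)} \<union> Inr ` {..<length (lo_col p)}"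

definition wf_tcpart :: "tcpart \<Rightarrow> bool" where
  "wf_tcpart p \<longleftrightarrow> partition_on (points p) (blocks p)"

definition through_blocks :: "tcpart \<Rightarrow> (nat + nat) set set" where
  "through_blocks p = {B \<in> blocks p. (\<exists>i. Inl i \<in> B) \<and> (\<exists>j. Inr j \<in> B)}"

definition mixed_pair_partitions :: "tcpart set" where
  "mixed_pair_partitions =
     {TCP [White, Black] [] {{Inl 0, Inl 1}}, TCP [Black, White] [] {{Inl 0, Inl 1}},
      TCP [] [White, Black] {{Inr 0, Inr 1}}, TCP [] [Black, White] {{Inr 0, Inr 1}}}"

text \<open>Row labelings with labels in [N] = {1..N}; labels left to right, as lists (0-based positions).\<close>
definition labelings :: "nat \<Rightarrow> nat \<Rightarrow> nat list set" where
  "labelings N k = {t. length t = k \<and> set t \<subseteq> {1..N}}"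

definition valid_upper :: "tcpart \<Rightarrow> nat list \<Rightarrow> bool" where
  "valid_upper p t \<longleftrightarrow> (\<forall>B\<in>blocks p. \<forall>i j. Inl i \<in> B \<longrightarrow> Inl j \<in> B \<longrightarrow> t ! i = t ! j)"

definition valid_lower :: "tcpart \<Rightarrow> nat list \<Rightarrow> bool" where
  "valid_lower p t \<longleftrightarrow> (\<forall>B\<in>blocks p. \<forall>i j. Inr i \<in> B \<longrightarrow> Inr j \<in> B \<longrightarrow> t ! i = t ! j)"

text \<open>Assignments of labels in [N] to the through-blocks (these replace the enumeration 1..r).\<close>
definition assignments :: "tcpart \<Rightarrow> nat \<Rightarrow> ((nat + nat) set \<Rightarrow> nat) set" where
  "assignments p N = PiE (through_blocks p) (\<lambda>_. {1..N})"

definition T0_up :: "tcpart \<Rightarrow> nat \<Rightarrow> nat list set" where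
  "T0_up p N = {t \<in> labelings N (length (up_col p)). \<not> valid_upper p t}"

definition T0_lo :: "tcpart \<Rightarrow> nat \<Rightarrow> nat list set" where
  "T0_lo p N = {t \<in> labelings N (length (lo_col p)). \<not> valid_lower p t}"

definition T_up :: "tcpart \<Rightarrow> nat \<Rightarrow> ((nat + nat) set \<Rightarrow> nat) \<Rightarrow> nat list set" where
  "T_up p N a = {t \<in> labelings N (length (up_col p)). valid_upper p t \<and>
     (\<forall>B\<in>through_blocks p. \<forall>i. Inl i \<in> B \<longrightarrow> t ! i = a B)}"

definition T_lo :: "tcpart \<Rightarrow> nat \<Rightarrow> ((nat + nat) set \<Rightarrow> nat) \<Rightarrow> nat list set" where
  "T_lo p N a = {t \<in> labelings N (length (lo_col p)). valid_lower p t \<and>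
     (\<forall>B\<in>through_blocks p. \<forall>j. Inr j \<in> B \<longrightarrow> t ! j = a B)}"

definition up_mono :: "tcpart \<Rightarrow> (nat \<Rightarrow> nat \<Rightarrow> 'a::unital_cstar_algebra) \<Rightarrow> nat list \<Rightarrow> nat list \<Rightarrow> 'a" where
  "up_mono p u t g = prod_list (map (\<lambda>m. cpow (up_col p ! m) (u (t ! m) (g ! m))) [0..<length (up_col p)])"

definition lo_mono :: "tcpart \<Rightarrow> (nat \<Rightarrow> nat \<Rightarrow> 'a::unital_cstar_algebra) \<Rightarrow> nat list \<Rightarrow> nat list \<Rightarrow> 'a" where
  "lo_mono p u g t = prod_list (map (\<lambda>m. cpow (lo_col p ! m) (u (g ! m) (t ! m))) [0..<length (lo_col p)])"

definition R_Gr :: "nat \<Rightarrow> tcpart \<Rightarrow> (nat \<Rightarrow> nat \<Rightarrow> 'a::unital_cstar_algebra) \<Rightarrow> bool" where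
  "R_Gr N p u \<longleftrightarrow>
     (\<forall>a\<in>assignments p N. \<forall>b\<in>assignments p N. \<forall>g\<in>T_up p N b. \<forall>g'\<in>T_lo p N a.
        (\<Sum>t\<in>T_up p N a. up_mono p u t g) = (\<Sum>t'\<in>T_lo p N b. lo_mono p u g' t')) \<and>
     (\<forall>g\<in>T0_up p N. \<forall>a\<in>assignments p N. (\<Sum>t\<in>T_up p N a. up_mono p u t g) = 0) \<and>
     (\<forall>g'\<in>T0_lo p N. \<forall>b\<in>assignments p N. (\<Sum>t'\<in>T_lo p N b. lo_mono p u g' t') = 0)"

definition vec_mono :: "colour list \<Rightarrow> (nat \<Rightarrow> 'a::unital_cstar_algebra) \<Rightarrow> nat list \<Rightarrow> 'a" where
  "vec_mono w x t = prod_list (map (\<lambda>m. cpow (w ! m) (x (t ! m))) [0..<length w])"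

definition R_Sp :: "nat \<Rightarrow> tcpart \<Rightarrow> (nat \<Rightarrow> 'a::unital_cstar_algebra) \<Rightarrow> bool" where
  "R_Sp N p x \<longleftrightarrow>
     (\<forall>a\<in>assignments p N.
        (\<Sum>t\<in>T_up p N a. vec_mono (up_col p) x t) = (\<Sum>t'\<in>T_lo p N a. vec_mono (lo_col p) x t'))"

end

theory Submission
  imports Defs
begin


definition M :: "colour list \<Rightarrow> (nat \<Rightarrow> nat \<Rightarrow> 'a::unital_cstar_algebra) \<Rightarrow> nat list \<Rightarrow> nat list \<Rightarrow> 'a" where
  "M w u t g = prod_list (map (\<lambda>m. cpow (w ! m) (u (t ! m) (g ! m))) [0..<length w])"

lemma M_Nil[simp]: "M [] u t g = 1"
  by (simp add: M_def)

lemma M_Cons[simp]: "M (c#w) u (x#t) (y#g) = cpow c (u x y) * M w u t g"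
proof -
  have "[0..<length (c#w)] = 0 # map Suc [0..<length w]"
    by (simp add: map_Suc_upt upt_conv_Cons del: upt_Suc)
  then show ?thesis by (simp add: M_def o_def)
qed

lemma adj_zero[simp]: "adj (0::'a::unital_cstar_algebra) = 0"
proof -
  have "adj (0::'a) = adj (0 + 0)" by simp
  also have "\<dots> = adj 0 + adj 0" by (rule adj_add)
  finally show ?thesis by simp
qed

lemma adj_one[simp]: "adj (1::'a::unital_cstar_algebra) = 1"
proof -
  have "adj (1::'a) = 1 * adj 1" by simp
  also have "\<dots> = adj (adj 1) * adj 1" by (simp only: adj_adj)
  also have "\<dots> = adj (1 * adj 1)" by (simp only: adj_mult)
  also have "\<dots> = 1" by (simp add: adj_adj)
  finally show ?thesis .
qed

lemma adj_sum: "adj (sum f A) = (\<Sum>x\<in>A. adj (f x :: 'a::unital_cstar_algebra))"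
  by (induction A rule: infinite_finite_induct) (auto simp: adj_add)

lemma adj_if: "adj (if P then (1::'a::unital_cstar_algebra) else 0) = (if P then 1 else 0)"
  by simp

lemma labelings_0[simp]: "labelings N 0 = {[]}"
  by (auto simp: labelings_def)

lemma labelings_Suc: "labelings N (Suc n) = (\<lambda>(x,t). x#t) ` ({1..N} \<times> labelings N n)"
  by (auto simp: labelings_def image_iff length_Suc_conv)

lemma finite_labelings[simp]: "finite (labelings N n)"
  by (induction n) (auto simp: labelings_Suc)

lemma sum_labelings_Suc:
  "sum f (labelings N (Suc n)) = (\<Sum>x\<in>{1..N}. \<Sum>t\<in>labelings N n. f (x#t))"
proof -
  have "inj_on (\<lambda>(x,t). x#t) ({1..N} \<times> labelings N n)" by (auto simp: inj_on_def)
  then show ?thesis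
    by (simp add: labelings_Suc sum.reindex sum.cartesian_product split_def)
qed

lemma labelings_Cons: "x#t \<in> labelings N (Suc n) \<longleftrightarrow> x \<in> {1..N} \<and> t \<in> labelings N n"
  by (auto simp: labelings_def)

locale unit_ctx =
  fixes N :: nat and u :: "nat \<Rightarrow> nat \<Rightarrow> 'a::unital_cstar_algebra"
  assumes U1: "\<And>i j. i \<in> {1..N} \<Longrightarrow> j \<in> {1..N} \<Longrightarrow> (\<Sum>s\<in>{1..N}. u i s * adj (u j s)) = (if i = j then 1 else 0)"
    and U2: "\<And>i j. i \<in> {1..N} \<Longrightarrow> j \<in> {1..N} \<Longrightarrow> (\<Sum>s\<in>{1..N}. adj (u i s) * u j s) = (if i = j then 1 else 0)"
    and U3: "\<And>i j. i \<in> {1..N} \<Longrightarrow> j \<in> {1..N} \<Longrightarrow> (\<Sum>s\<in>{1..N}. u s i * adj (u s j)) = (if i = j then 1 else 0)"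
    and U4: "\<And>i j. i \<in> {1..N} \<Longrightarrow> j \<in> {1..N} \<Longrightarrow> (\<Sum>s\<in>{1..N}. adj (u s i) * u s j) = (if i = j then 1 else 0)"
begin

lemma cU1: "i \<in> {1..N} \<Longrightarrow> j \<in> {1..N} \<Longrightarrow> (\<Sum>s\<in>{1..N}. cpow c (u i s) * adj (cpow c (u j s))) = (if i = j then 1 else 0)"
  using U1[of i j] U2[of i j] by (cases c) (simp_all add: cpow_def adj_adj)

lemma cU2: "i \<in> {1..N} \<Longrightarrow> j \<in> {1..N} \<Longrightarrow> (\<Sum>s\<in>{1..N}. adj (cpow c (u s i)) * cpow c (u s j)) = (if i = j then 1 else 0)"
  using U3[of i j] U4[of i j] by (cases c) (simp_all add: cpow_def adj_adj)

lemma MA: "t \<in> labelings N (length w) \<Longrightarrow> s \<in> labelings N (length w) \<Longrightarrow>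
  (\<Sum>g\<in>labelings N (length w). M w u t g * adj (M w u s g)) = (if t = s then 1 else 0)"
proof (induction w arbitrary: t s)
  case Nil
  then show ?case by simp
next
  case (Cons c w)
  obtain x t' where t: "t = x#t'" using Cons.prems by (cases t) (auto simp: labelings_def)
  obtain y s' where s: "s = y#s'" using Cons.prems by (cases s) (auto simp: labelings_def)
  have x: "x \<in> {1..N}" "t' \<in> labelings N (length w)" using Cons.prems t by (auto simp: labelings_Cons)
  have y: "y \<in> {1..N}" "s' \<in> labelings N (length w)" using Cons.prems s by (auto simp: labelings_Cons)
  have "(\<Sum>g\<in>labelings N (length (c#w)). M (c#w) u t g * adj (M (c#w) u s g))
    = (\<Sum>z\<in>{1..N}. \<Sum>g\<in>labelings N (length w). cpow c (u x z) * (M w u t' g * adj (M w u s' g)) * adj (cpow c (u y z)))"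
    by (simp add: sum_labelings_Suc t s adj_mult mult.assoc)
  also have "\<dots> = (\<Sum>z\<in>{1..N}. cpow c (u x z) * (\<Sum>g\<in>labelings N (length w). M w u t' g * adj (M w u s' g)) * adj (cpow c (u y z)))"
    by (simp add: sum_distrib_left sum_distrib_right)
  also have "\<dots> = (\<Sum>z\<in>{1..N}. cpow c (u x z) * (if t' = s' then 1 else 0) * adj (cpow c (u y z)))"
    using Cons.IH x y by simp
  also have "\<dots> = (if t = s then 1 else 0)"
    using cU1[OF x(1) y(1), of c] by (auto simp: t s)
  finally show ?case .
qed

lemma MB: "i \<in> labelings N (length w) \<Longrightarrow> m \<in> labelings N (length w) \<Longrightarrow>
  (\<Sum>j\<in>labelings N (length w). adj (M w u j i) * M w u j m) = (if i = m then 1 else 0)"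
proof (induction w arbitrary: i m)
  case Nil
  then show ?case by simp
next
  case (Cons c w)
  obtain x i' where i: "i = x#i'" using Cons.prems by (cases i) (auto simp: labelings_def)
  obtain y m' where m: "m = y#m'" using Cons.prems by (cases m) (auto simp: labelings_def)
  have x: "x \<in> {1..N}" "i' \<in> labelings N (length w)" using Cons.prems i by (auto simp: labelings_Cons)
  have y: "y \<in> {1..N}" "m' \<in> labelings N (length w)" using Cons.prems m by (auto simp: labelings_Cons)
  have "(\<Sum>j\<in>labelings N (length (c#w)). adj (M (c#w) u j i) * M (c#w) u j m)
    = (\<Sum>z\<in>{1..N}. \<Sum>j\<in>labelings N (length w). adj (M w u j i') * (adj (cpow c (u z x)) * cpow c (u z y)) * M w u j m')"
    by (simp add: sum_labelings_Suc i m adj_mult mult.assoc)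
  also have "\<dots> = (\<Sum>j\<in>labelings N (length w). \<Sum>z\<in>{1..N}. adj (M w u j i') * (adj (cpow c (u z x)) * cpow c (u z y)) * M w u j m')"
    by (rule sum.swap)
  also have "\<dots> = (\<Sum>j\<in>labelings N (length w). adj (M w u j i') * (\<Sum>z\<in>{1..N}. adj (cpow c (u z x)) * cpow c (u z y)) * M w u j m')"
    by (simp add: sum_distrib_left sum_distrib_right)
  also have "\<dots> = (\<Sum>j\<in>labelings N (length w). adj (M w u j i') * (if x = y then 1 else 0) * M w u j m')"
    using cU2[OF x(1) y(1), of c] by simp
  also have "\<dots> = (if i = m then 1 else 0)"
    using Cons.IH x y by (auto simp: i m)
  finally show ?case .
qed

end



definition validS :: "tcpart \<Rightarrow> (nat \<Rightarrow> nat + nat) \<Rightarrow> nat list \<Rightarrow> bool" where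
  "validS p s t \<longleftrightarrow> (\<forall>B\<in>blocks p. \<forall>i j. s i \<in> B \<longrightarrow> s j \<in> B \<longrightarrow> t ! i = t ! j)"

definition TS :: "tcpart \<Rightarrow> nat \<Rightarrow> (nat \<Rightarrow> nat + nat) \<Rightarrow> nat \<Rightarrow> ((nat + nat) set \<Rightarrow> nat) \<Rightarrow> nat list set" where
  "TS p N s n a = {t \<in> labelings N n. validS p s t \<and> (\<forall>B\<in>through_blocks p. \<forall>i. s i \<in> B \<longrightarrow> t ! i = a B)}"

lemma T_up_TS: "T_up p N a = TS p N Inl (length (up_col p)) a"
  by (simp add: T_up_def TS_def validS_def valid_upper_def)
lemma T_lo_TS: "T_lo p N a = TS p N Inr (length (lo_col p)) a"
  by (simp add: T_lo_def TS_def validS_def valid_lower_def)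
lemma T0_up_S: "T0_up p N = {t \<in> labelings N (length (up_col p)). \<not> validS p Inl t}"
  by (simp add: T0_up_def validS_def valid_upper_def)
lemma T0_lo_S: "T0_lo p N = {t \<in> labelings N (length (lo_col p)). \<not> validS p Inr t}"
  by (simp add: T0_lo_def validS_def valid_lower_def)

locale side =
  fixes p :: tcpart and N :: nat and s :: "nat \<Rightarrow> nat + nat" and n :: nat
  assumes N1: "1 \<le> N"
    and disj: "disjoint (blocks p)"
    and finb: "finite (blocks p)"
    and bnd: "\<And>B i. B \<in> blocks p \<Longrightarrow> s i \<in> B \<Longrightarrow> i < n"
    and tbs: "\<And>B. B \<in> through_blocks p \<Longrightarrow> \<exists>i. s i \<in> B"
begin

abbreviation "A \<equiv> assignments p N"
abbreviation "T \<equiv> TS p N s n"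

lemma tb_blocks: "B \<in> through_blocks p \<Longrightarrow> B \<in> blocks p"
  by (simp add: through_blocks_def)

lemma finite_tb: "finite (through_blocks p)"
  using finb by (simp add: through_blocks_def)

lemma T_sub: "T a \<subseteq> labelings N n" by (auto simp: TS_def)
lemma finite_T[simp]: "finite (T a)" by (rule finite_subset[OF T_sub]) simp

lemma the_tb: "B \<in> through_blocks p \<Longrightarrow> s i \<in> B \<Longrightarrow> (THE B'. B' \<in> through_blocks p \<and> s i \<in> B') = B"
  apply (rule the_equality)
   apply simp
  using disjointD[OF disj] tb_blocks by blast

lemma T_unique: "a \<in> A \<Longrightarrow> c \<in> A \<Longrightarrow> t \<in> T a \<Longrightarrow> t \<in> T c \<Longrightarrow> a = c"
  unfolding assignments_def
proof (rule PiE_ext)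
  fix B assume a: "a \<in> PiE (through_blocks p) (\<lambda>_. {1..N})" and c: "c \<in> PiE (through_blocks p) (\<lambda>_. {1..N})"
    and ta: "t \<in> T a" and tc: "t \<in> T c" and B: "B \<in> through_blocks p"
  obtain i where "s i \<in> B" using tbs[OF B] by blast
  then show "a B = c B" using ta tc B by (auto simp: TS_def)
qed

lemma T_exists: "t \<in> labelings N n \<Longrightarrow> validS p s t \<Longrightarrow> \<exists>a\<in>A. t \<in> T a"
proof -
  assume t: "t \<in> labelings N n" and v: "validS p s t"
  define a where "a = restrict (\<lambda>B. t ! (SOME i. s i \<in> B)) (through_blocks p)"
  have si: "s (SOME i. s i \<in> B) \<in> B" if "B \<in> through_blocks p" for B
    using tbs[OF that] by (rule someI_ex)
  have "a \<in> A"
    unfolding assignments_def a_def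
  proof (rule restrict_PiE_iff[THEN iffD2], intro ballI)
    fix B assume B: "B \<in> through_blocks p"
    have "(SOME i. s i \<in> B) < n" using bnd[OF tb_blocks[OF B] si[OF B]] .
    then have "t ! (SOME i. s i \<in> B) \<in> set t" using t by (simp add: labelings_def)
    then show "t ! (SOME i. s i \<in> B) \<in> {1..N}" using t by (auto simp: labelings_def)
  qed
  moreover have "\<forall>B\<in>through_blocks p. \<forall>i. s i \<in> B \<longrightarrow> t ! i = a B"
  proof (intro ballI allI impI)
    fix B i assume B: "B \<in> through_blocks p" and sB: "s i \<in> B"
    have "t ! i = t ! (SOME i. s i \<in> B)"
      using v tb_blocks[OF B] sB si[OF B] unfolding validS_def by blast
    then show "t ! i = a B" using B by (simp add: a_def)
  qed
  then have "t \<in> T a" using t v by (simp add: TS_def)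
  ultimately show ?thesis by blast
qed

definition rl :: "((nat + nat) set \<Rightarrow> nat) \<Rightarrow> nat list \<Rightarrow> nat list" where
  "rl a t = map (\<lambda>i. if \<exists>B\<in>through_blocks p. s i \<in> B then a (THE B. B \<in> through_blocks p \<and> s i \<in> B) else t ! i) [0..<n]"

lemma rl_nth: "i < n \<Longrightarrow> rl a t ! i = (if \<exists>B\<in>through_blocks p. s i \<in> B then a (THE B. B \<in> through_blocks p \<and> s i \<in> B) else t ! i)"
  by (simp add: rl_def)

lemma not_tb: "B \<in> blocks p \<Longrightarrow> B \<notin> through_blocks p \<Longrightarrow> s i \<in> B \<Longrightarrow> \<not> (\<exists>B'\<in>through_blocks p. s i \<in> B')"
  using disjointD[OF disj] tb_blocks by blast

lemma rl_T: assumes a: "a \<in> A" and t: "t \<in> T b" shows "rl a t \<in> T a"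
proof -
  have tl: "length t = n" "set t \<subseteq> {1..N}" and tv: "validS p s t" using t by (auto simp: TS_def labelings_def)
  have len: "length (rl a t) = n" by (simp add: rl_def)
  have ab: "a B \<in> {1..N}" if "B \<in> through_blocks p" for B
    using a that by (auto simp: assignments_def PiE_iff)
  have "set (rl a t) \<subseteq> {1..N}"
  proof
    fix x assume "x \<in> set (rl a t)"
    then obtain i where i: "i < n" "x = rl a t ! i" using len by (auto simp: in_set_conv_nth)
    show "x \<in> {1..N}"
    proof (cases "\<exists>B\<in>through_blocks p. s i \<in> B")
      case True
      then obtain B where B: "B \<in> through_blocks p" "s i \<in> B" by blast
      then have "rl a t ! i = a B" using i(1) rl_nth the_tb by auto
      then show ?thesis using i(2) ab[OF B(1)] by simp
    next
      case False
      then have "rl a t ! i = t ! i" using i(1) rl_nth by simp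
      moreover have "t ! i \<in> set t" using i(1) tl(1) by simp
      ultimately show ?thesis using i(2) tl(2) by auto
    qed
  qed
  then have lab: "rl a t \<in> labelings N n" using len by (simp add: labelings_def)
  have val: "validS p s (rl a t)"
    unfolding validS_def
  proof (intro ballI allI impI)
    fix B i j assume B: "B \<in> blocks p" and si: "s i \<in> B" and sj: "s j \<in> B"
    have ij: "i < n" "j < n" using bnd[OF B si] bnd[OF B sj] .
    show "rl a t ! i = rl a t ! j"
    proof (cases "B \<in> through_blocks p")
      case True
      have "rl a t ! i = a B" using rl_nth[OF ij(1)] the_tb[OF True si] True si by auto
      moreover have "rl a t ! j = a B" using rl_nth[OF ij(2)] the_tb[OF True sj] True sj by auto
      ultimately show ?thesis by simp
    next
      case False
      have "rl a t ! i = t ! i" using rl_nth[OF ij(1)] not_tb[OF B False si] by simp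
      moreover have "rl a t ! j = t ! j" using rl_nth[OF ij(2)] not_tb[OF B False sj] by simp
      moreover have "t ! i = t ! j" using tv B si sj unfolding validS_def by blast
      ultimately show ?thesis by simp
    qed
  qed
  have "\<forall>B\<in>through_blocks p. \<forall>i. s i \<in> B \<longrightarrow> rl a t ! i = a B"
  proof (intro ballI allI impI)
    fix B i assume B: "B \<in> through_blocks p" and si: "s i \<in> B"
    have "i < n" using bnd[OF tb_blocks[OF B] si] .
    then show "rl a t ! i = a B" using rl_nth the_tb[OF B si] B si by auto
  qed
  then show ?thesis using lab val by (simp add: TS_def)
qed

lemma rl_rl: assumes t: "t \<in> T a" shows "rl a (rl b t) = t"
proof -
  have tl: "length t = n" using t by (auto simp: TS_def labelings_def)
  show ?thesis
  proof (rule nth_equalityI)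
    show "length (rl a (rl b t)) = length t" using tl by (simp add: rl_def)
    fix i assume "i < length (rl a (rl b t))"
    then have i: "i < n" by (simp add: rl_def)
    show "rl a (rl b t) ! i = t ! i"
    proof (cases "\<exists>B\<in>through_blocks p. s i \<in> B")
      case True
      then obtain B where "B \<in> through_blocks p" "s i \<in> B" by blast
      then show ?thesis using i rl_nth the_tb t by (simp add: TS_def)
    next
      case False
      then show ?thesis using i rl_nth by simp
    qed
  qed
qed

lemma card_T: "a \<in> A \<Longrightarrow> b \<in> A \<Longrightarrow> card (T a) = card (T b)"
proof -
  assume a: "a \<in> A" and b: "b \<in> A"
  have "bij_betw (rl b) (T a) (T b)"
    by (rule bij_betwI[where g = "rl a"]) (auto simp: rl_T a b rl_rl)
  then show ?thesis by (rule bij_betw_same_card)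
qed

definition b1 :: "(nat + nat) set \<Rightarrow> nat" where "b1 = restrict (\<lambda>_. 1) (through_blocks p)"

lemma b1_A: "b1 \<in> A" using N1 by (simp add: b1_def assignments_def)

lemma rep_T: "replicate n 1 \<in> T b1"
proof -
  have "\<forall>B\<in>through_blocks p. \<forall>i. s i \<in> B \<longrightarrow> replicate n 1 ! i = b1 B"
  proof (intro ballI allI impI)
    fix B i assume "B \<in> through_blocks p" "s i \<in> B"
    moreover then have "i < n" using bnd tb_blocks by blast
    ultimately show "replicate n 1 ! i = b1 B" by (simp add: b1_def)
  qed
  moreover have "validS p s (replicate n 1)"
    unfolding validS_def using bnd by auto
  ultimately show ?thesis using N1 by (auto simp: TS_def labelings_def)
qed

lemma T_ne: "a \<in> A \<Longrightarrow> rl a (replicate n 1) \<in> T a"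
  using rl_T rep_T by blast

lemma rep_T_iff: "b \<in> A \<Longrightarrow> replicate n 1 \<in> T b \<longleftrightarrow> b = b1"
  using T_unique b1_A rep_T by blast

lemma finite_A[simp]: "finite A"
  unfolding assignments_def using finite_tb by (simp add: finite_PiE)

lemma sum_ind: "a0 \<in> A \<Longrightarrow> g \<in> T a0 \<Longrightarrow> (\<Sum>b\<in>A. if g \<in> T b then h b else 0) = h a0"
proof -
  assume a0: "a0 \<in> A" and g: "g \<in> T a0"
  have "(\<Sum>b\<in>A. if g \<in> T b then h b else 0) = (\<Sum>b\<in>A. if b = a0 then h b else 0)"
    by (rule sum.cong) (use T_unique a0 g in auto)
  also have "\<dots> = h a0" using a0 finite_A by simp
  finally show ?thesis .
qed

lemma regroup:
  assumes "\<And>g. g \<in> labelings N n \<Longrightarrow> \<not> validS p s g \<Longrightarrow> f g = 0"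
  shows "sum f (labelings N n) = (\<Sum>b\<in>A. \<Sum>g\<in>T b. f g)"
proof -
  have "(\<Sum>b\<in>A. \<Sum>g\<in>T b. f g) = (\<Sum>b\<in>A. \<Sum>g\<in>labelings N n. if g \<in> T b then f g else 0)"
  proof (rule sum.cong[OF refl])
    fix b
    have "T b = labelings N n \<inter> T b" using T_sub by blast
    then show "(\<Sum>g\<in>T b. f g) = (\<Sum>g\<in>labelings N n. if g \<in> T b then f g else 0)"
      by (metis finite_labelings sum.inter_restrict)
  qed
  also have "\<dots> = (\<Sum>g\<in>labelings N n. \<Sum>b\<in>A. if g \<in> T b then f g else 0)"
    by (rule sum.swap)
  also have "\<dots> = sum f (labelings N n)"
  proof (rule sum.cong[OF refl])
    fix g assume g: "g \<in> labelings N n"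
    show "(\<Sum>b\<in>A. if g \<in> T b then f g else 0) = f g"
    proof (cases "validS p s g")
      case True
      then obtain a0 where "a0 \<in> A" "g \<in> T a0" using T_exists g by blast
      then show ?thesis by (rule sum_ind)
    next
      case False
      then have "g \<notin> T b" for b by (simp add: TS_def)
      then show ?thesis using assms g False by simp
    qed
  qed
  finally show ?thesis ..
qed

end


lemma up_mono_M: "up_mono p u t g = M (up_col p) u t g" by (simp add: up_mono_def M_def)
lemma lo_mono_M: "lo_mono p u g t = M (lo_col p) u g t" by (simp add: lo_mono_def M_def)

locale mainctx = unit_ctx N u for N :: nat and u :: "nat \<Rightarrow> nat \<Rightarrow> 'a::unital_cstar_algebra" +
  fixes p :: tcpart
  assumes N1: "1 \<le> N" and wf: "wf_tcpart p" and RG: "R_Gr N p u"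
begin

lemma pon: "partition_on (points p) (blocks p)" using wf by (simp add: wf_tcpart_def)

lemma finb: "finite (blocks p)"
proof -
  have "finite (points p)" by (simp add: points_def)
  then have "finite (\<Union>(blocks p))" using partition_onD1[OF pon] by simp
  then show ?thesis by (rule finite_UnionD)
qed

lemma inpts: "B \<in> blocks p \<Longrightarrow> x \<in> B \<Longrightarrow> x \<in> points p"
  using partition_onD1[OF pon] by blast

sublocale up: side p N Inl "length (up_col p)"
proof
  show "1 \<le> N" by (rule N1)
  show "disjoint (blocks p)" by (rule partition_onD2[OF pon])
  show "finite (blocks p)" by (rule finb)
  show "\<And>B i. B \<in> blocks p \<Longrightarrow> Inl i \<in> B \<Longrightarrow> i < length (up_col p)"
    using inpts by (auto simp: points_def)
  show "\<And>B. B \<in> through_blocks p \<Longrightarrow> \<exists>i. Inl i \<in> B" by (auto simp: through_blocks_def)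
qed

sublocale lo: side p N Inr "length (lo_col p)"
proof
  show "1 \<le> N" by (rule N1)
  show "disjoint (blocks p)" by (rule partition_onD2[OF pon])
  show "finite (blocks p)" by (rule finb)
  show "\<And>B i. B \<in> blocks p \<Longrightarrow> Inr i \<in> B \<Longrightarrow> i < length (lo_col p)"
    using inpts by (auto simp: points_def)
  show "\<And>B. B \<in> through_blocks p \<Longrightarrow> \<exists>i. Inr i \<in> B" by (auto simp: through_blocks_def)
qed

abbreviation "AS \<equiv> assignments p N"
abbreviation "k \<equiv> length (up_col p)"
abbreviation "l \<equiv> length (lo_col p)"

definition S where "S a g = (\<Sum>t\<in>T_up p N a. M (up_col p) u t g)"
definition L where "L b g' = (\<Sum>t\<in>T_lo p N b. M (lo_col p) u g' t)"
definition F where "F a b = S a (up.rl b (replicate k 1))"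


lemma RG1: "a \<in> AS \<Longrightarrow> b \<in> AS \<Longrightarrow> g \<in> T_up p N b \<Longrightarrow> g' \<in> T_lo p N a \<Longrightarrow> S a g = L b g'"
  using RG unfolding R_Gr_def S_def L_def up_mono_M lo_mono_M by blast

lemma RG2: "g \<in> labelings N k \<Longrightarrow> \<not> validS p Inl g \<Longrightarrow> a \<in> AS \<Longrightarrow> S a g = 0"
  using RG unfolding R_Gr_def S_def up_mono_M T0_up_S by blast

lemma RG3: "g' \<in> labelings N l \<Longrightarrow> \<not> validS p Inr g' \<Longrightarrow> b \<in> AS \<Longrightarrow> L b g' = 0"
  using RG unfolding R_Gr_def L_def lo_mono_M T0_lo_S by blast

lemma canon_up: "b \<in> AS \<Longrightarrow> up.rl b (replicate k 1) \<in> T_up p N b"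
  using up.T_ne by (simp add: T_up_TS)

lemma canon_lo: "a \<in> AS \<Longrightarrow> lo.rl a (replicate l 1) \<in> T_lo p N a"
  using lo.T_ne by (simp add: T_lo_TS)

lemma F_eq: "a \<in> AS \<Longrightarrow> b \<in> AS \<Longrightarrow> g \<in> T_up p N b \<Longrightarrow> S a g = F a b"
  unfolding F_def using RG1 canon_up canon_lo by metis

lemma S_prod: "S a g * adj (S c g) = (\<Sum>t\<in>T_up p N a. \<Sum>t2\<in>T_up p N c. M (up_col p) u t g * adj (M (up_col p) u t2 g))"
  by (simp add: S_def adj_sum sum_distrib_left sum_distrib_right) (rule sum.swap)

lemma Tup_lab: "t \<in> T_up p N a \<Longrightarrow> t \<in> labelings N k"
  using up.T_sub by (auto simp: T_up_TS)
lemma Tlo_lab: "t \<in> T_lo p N a \<Longrightarrow> t \<in> labelings N l"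
  using lo.T_sub by (auto simp: T_lo_TS)

lemma FF: assumes a: "a \<in> AS" and c: "c \<in> AS"
  shows "(\<Sum>b\<in>AS. F a b * adj (F c b)) = (if a = c then 1 else 0)"
proof -
  define n where "n = card (T_up p N up.b1)"
  have cn: "card (T_up p N b) = n" if "b \<in> AS" for b
    using up.card_T[OF that up.b1_A] by (simp add: n_def T_up_TS)
  have "n > 0"
  proof -
    have "T_up p N up.b1 \<noteq> {}" using canon_up[OF up.b1_A] by blast
    then show ?thesis unfolding n_def using up.finite_T by (simp add: T_up_TS card_gt_0_iff)
  qed
  have E1: "(\<Sum>g\<in>labelings N k. S a g * adj (S c g)) = of_nat n * (\<Sum>b\<in>AS. F a b * adj (F c b))"
  proof -
    have "(\<Sum>g\<in>labelings N k. S a g * adj (S c g)) = (\<Sum>b\<in>AS. \<Sum>g\<in>up.T b. S a g * adj (S c g))"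
      by (rule up.regroup) (simp add: RG2 a)
    also have "\<dots> = (\<Sum>b\<in>AS. \<Sum>g\<in>T_up p N b. F a b * adj (F c b))"
    proof (rule sum.cong[OF refl])
      fix b assume b: "b \<in> AS"
      show "(\<Sum>g\<in>up.T b. S a g * adj (S c g)) = (\<Sum>g\<in>T_up p N b. F a b * adj (F c b))"
        unfolding T_up_TS by (rule sum.cong[OF refl]) (metis F_eq T_up_TS a b c)
    qed
    also have "\<dots> = (\<Sum>b\<in>AS. of_nat n * (F a b * adj (F c b)))"
      by (rule sum.cong[OF refl]) (simp add: cn)
    also have "\<dots> = of_nat n * (\<Sum>b\<in>AS. F a b * adj (F c b))"
      by (simp add: sum_distrib_left)
    finally show ?thesis .
  qed
  have E2: "(\<Sum>g\<in>labelings N k. S a g * adj (S c g)) = (if a = c then of_nat n else 0)"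
  proof -
    have "(\<Sum>g\<in>labelings N k. S a g * adj (S c g))
        = (\<Sum>g\<in>labelings N k. \<Sum>t\<in>T_up p N a. \<Sum>t2\<in>T_up p N c. M (up_col p) u t g * adj (M (up_col p) u t2 g))"
      by (simp add: S_prod)
    also have "\<dots> = (\<Sum>t\<in>T_up p N a. \<Sum>g\<in>labelings N k. \<Sum>t2\<in>T_up p N c. M (up_col p) u t g * adj (M (up_col p) u t2 g))"
      by (rule sum.swap)
    also have "\<dots> = (\<Sum>t\<in>T_up p N a. \<Sum>t2\<in>T_up p N c. \<Sum>g\<in>labelings N k. M (up_col p) u t g * adj (M (up_col p) u t2 g))"
      by (rule sum.cong[OF refl], rule sum.swap)
    also have "\<dots> = (\<Sum>t\<in>T_up p N a. \<Sum>t2\<in>T_up p N c. if t = t2 then 1 else 0)"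
      by (intro sum.cong refl) (simp add: MA Tup_lab)
    also have "\<dots> = (\<Sum>t\<in>T_up p N a. if t \<in> T_up p N c then 1 else 0)"
      by (intro sum.cong refl) (simp add: T_up_TS)
    also have "\<dots> = (if a = c then of_nat n else 0)"
    proof (cases "a = c")
      case True
      then show ?thesis using cn[OF a] by simp
    next
      case False
      have "t \<notin> T_up p N c" if "t \<in> T_up p N a" for t
        using up.T_unique[OF a c] that False by (auto simp: T_up_TS)
      then show ?thesis using False by simp
    qed
    finally show ?thesis .
  qed
  have e: "of_nat n * (\<Sum>b\<in>AS. F a b * adj (F c b)) = of_nat n * (if a = c then 1 else 0)"
    using E1 E2 by (cases "a = c") auto
  have "scaleR (real n) (\<Sum>b\<in>AS. F a b * adj (F c b)) = scaleR (real n) (if a = c then 1 else 0)"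
    using e by (simp only: scaleR_conv_of_real of_real_of_nat_eq)
  then show ?thesis using \<open>n > 0\<close> by simp
qed

lemma IND: assumes c: "c \<in> AS" and j: "j \<in> labelings N l"
  shows "(if j \<in> T_lo p N c then 1 else 0) = (\<Sum>b\<in>AS. L b j * adj (F c b))"
proof (cases "validS p Inr j")
  case True
  then obtain a0 where a0: "a0 \<in> AS" "j \<in> T_lo p N a0" using lo.T_exists j by (auto simp: T_lo_TS)
  have "L b j = F a0 b" if b: "b \<in> AS" for b
    using RG1[OF a0(1) b canon_up[OF b] a0(2)] by (simp add: F_def)
  then have "(\<Sum>b\<in>AS. L b j * adj (F c b)) = (\<Sum>b\<in>AS. F a0 b * adj (F c b))" by simp
  also have "\<dots> = (if a0 = c then 1 else 0)" by (rule FF[OF a0(1) c])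
  also have "\<dots> = (if j \<in> T_lo p N c then 1 else 0)"
    using lo.T_unique[OF a0(1) c] a0(2) by (auto simp: T_lo_TS)
  finally show ?thesis ..
next
  case False
  then have "L b j = 0" if "b \<in> AS" for b using RG3 j that by blast
  moreover have "j \<notin> T_lo p N c" using False by (simp add: T_lo_TS TS_def)
  ultimately show ?thesis by simp
qed

lemma b1_eq: "lo.b1 = up.b1" by (simp add: up.b1_def lo.b1_def)

lemma rep_lab: "replicate n 1 \<in> labelings N n" using N1 by (cases n) (auto simp: labelings_def)

lemma G: assumes b: "b \<in> AS"
  shows "(\<Sum>j\<in>labelings N l. adj (M (lo_col p) u j (replicate l 1)) * L b j) = (if b = lo.b1 then 1 else 0)"
proof -
  have "(\<Sum>j\<in>labelings N l. adj (M (lo_col p) u j (replicate l 1)) * L b j)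
     = (\<Sum>j\<in>labelings N l. \<Sum>m\<in>T_lo p N b. adj (M (lo_col p) u j (replicate l 1)) * M (lo_col p) u j m)"
    by (simp add: L_def sum_distrib_left)
  also have "\<dots> = (\<Sum>m\<in>T_lo p N b. \<Sum>j\<in>labelings N l. adj (M (lo_col p) u j (replicate l 1)) * M (lo_col p) u j m)"
    by (rule sum.swap)
  also have "\<dots> = (\<Sum>m\<in>T_lo p N b. if replicate l 1 = m then 1 else 0)"
  proof (intro sum.cong refl)
    fix m assume "m \<in> T_lo p N b"
    then show "(\<Sum>j\<in>labelings N l. adj (M (lo_col p) u j (replicate l 1)) * M (lo_col p) u j m) = (if replicate l 1 = m then 1 else 0)"
      by (rule MB[OF rep_lab Tlo_lab])
  qed
  also have "\<dots> = (if replicate l 1 \<in> T_lo p N b then 1 else 0)"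
    by (simp add: T_lo_TS)
  also have "\<dots> = (if b = lo.b1 then 1 else 0)"
    using lo.rep_T_iff[OF b] by (simp add: T_lo_TS)
  finally show ?thesis .
qed

lemma vec_M: "vec_mono w (\<lambda>i. u i 1) t = M w u t (replicate (length w) 1)"
  unfolding vec_mono_def M_def by (auto intro!: arg_cong[where f = prod_list])

lemma main: "R_Sp N p (\<lambda>i. u i 1)"
  unfolding R_Sp_def
proof (intro ballI)
  fix c assume c: "c \<in> AS"
  have LHS: "(\<Sum>t\<in>T_up p N c. vec_mono (up_col p) (\<lambda>i. u i 1) t) = F c up.b1"
  proof -
    have "(\<Sum>t\<in>T_up p N c. vec_mono (up_col p) (\<lambda>i. u i 1) t) = S c (replicate k 1)"
      unfolding S_def by (rule sum.cong[OF refl]) (rule vec_M)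
    also have "\<dots> = F c up.b1"
      using F_eq[OF c up.b1_A] up.rep_T by (simp add: T_up_TS)
    finally show ?thesis .
  qed
  define R where "R = (\<Sum>t\<in>T_lo p N c. M (lo_col p) u t (replicate l 1))"
  have "adj R = (\<Sum>j\<in>T_lo p N c. adj (M (lo_col p) u j (replicate l 1)))"
    by (simp add: R_def adj_sum)
  also have "\<dots> = (\<Sum>j\<in>labelings N l. adj (M (lo_col p) u j (replicate l 1)) * (if j \<in> T_lo p N c then 1 else 0))"
  proof -
    have e: "T_lo p N c = labelings N l \<inter> T_lo p N c" using Tlo_lab by blast
    have "(\<Sum>j\<in>labelings N l. adj (M (lo_col p) u j (replicate l 1)) * (if j \<in> T_lo p N c then 1 else 0))
      = (\<Sum>j\<in>labelings N l. if j \<in> T_lo p N c then adj (M (lo_col p) u j (replicate l 1)) else 0)"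
      by (intro sum.cong refl) simp
    also have "\<dots> = (\<Sum>j\<in>labelings N l \<inter> T_lo p N c. adj (M (lo_col p) u j (replicate l 1)))"
      by (rule sum.inter_restrict[symmetric]) simp
    also have "\<dots> = (\<Sum>j\<in>T_lo p N c. adj (M (lo_col p) u j (replicate l 1)))"
      using e by simp
    finally show ?thesis by simp
  qed
  also have "\<dots> = (\<Sum>j\<in>labelings N l. adj (M (lo_col p) u j (replicate l 1)) * (\<Sum>b\<in>AS. L b j * adj (F c b)))"
    by (intro sum.cong refl) (simp add: IND[OF c])
  also have "\<dots> = (\<Sum>j\<in>labelings N l. \<Sum>b\<in>AS. adj (M (lo_col p) u j (replicate l 1)) * L b j * adj (F c b))"
    by (simp add: sum_distrib_left mult.assoc)
  also have "\<dots> = (\<Sum>b\<in>AS. \<Sum>j\<in>labelings N l. adj (M (lo_col p) u j (replicate l 1)) * L b j * adj (F c b))"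
    by (rule sum.swap)
  also have "\<dots> = (\<Sum>b\<in>AS. (\<Sum>j\<in>labelings N l. adj (M (lo_col p) u j (replicate l 1)) * L b j) * adj (F c b))"
    by (simp add: sum_distrib_right)
  also have "\<dots> = (\<Sum>b\<in>AS. (if b = lo.b1 then 1 else 0) * adj (F c b))"
  proof (intro sum.cong refl)
    fix b assume "b \<in> AS"
    show "(\<Sum>j\<in>labelings N l. adj (M (lo_col p) u j (replicate l 1)) * L b j) * adj (F c b) = (if b = lo.b1 then 1 else 0) * adj (F c b)"
      by (subst G[OF \<open>b \<in> AS\<close>]) (rule refl)
  qed
  also have "\<dots> = (\<Sum>b\<in>AS. if b = lo.b1 then adj (F c b) else 0)"
    by (intro sum.cong refl) simp
  also have "\<dots> = adj (F c lo.b1)"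
    using lo.b1_A lo.finite_A by simp
  finally have "adj R = adj (F c up.b1)" .
  then have "adj (adj R) = adj (adj (F c up.b1))" by simp
  then have "R = F c up.b1" by (simp only: adj_adj)
  then show "(\<Sum>t\<in>T_up p N c. vec_mono (up_col p) (\<lambda>i. u i 1) t) = (\<Sum>t'\<in>T_lo p N c. vec_mono (lo_col p) (\<lambda>i. u i 1) t')"
  proof -
    have "(\<Sum>t'\<in>T_lo p N c. vec_mono (lo_col p) (\<lambda>i. u i 1) t') = R"
      unfolding R_def by (rule sum.cong[OF refl]) (rule vec_M)
    then show ?thesis using LHS \<open>R = F c up.b1\<close> by simp
  qed
qed

end


lemma lab2: "labelings N 2 = {[x, y] | x y. x \<in> {1..N} \<and> y \<in> {1..N}}"
  by (auto simp: labelings_def numeral_2_eq_2 length_Suc_conv)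

lemma pair_img: "{t \<in> labelings N 2. t ! 0 = t ! 1} = (\<lambda>s. [s, s]) ` {1..N}"
  by (auto simp: lab2)

lemma sum_pair_img: "(\<Sum>t\<in>(\<lambda>s. [s, s]) ` {1..N}. f t) = (\<Sum>s\<in>{1..N}. f [s, s])"
  by (rule sum.reindex_cong[where l = "\<lambda>s. [s, s]"]) (auto simp: inj_on_def)

lemma lo_pair:
  fixes u :: "nat \<Rightarrow> nat \<Rightarrow> 'a::unital_cstar_algebra"
  assumes R: "R_Gr N (TCP [] [c1, c2] {{Inr 0, Inr 1}}) u" and i: "i \<in> {1..N}" and j: "j \<in> {1..N}"
  shows "(\<Sum>s\<in>{1..N}. cpow c1 (u i s) * cpow c2 (u j s)) = (if i = j then 1 else 0)"
proof -
  define p where "p = TCP [] [c1, c2] {{Inr 0, Inr 1}}"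
  have tb: "through_blocks p = {}" by (auto simp: through_blocks_def p_def)
  define a0 :: "(nat + nat) set \<Rightarrow> nat" where "a0 = (\<lambda>_. undefined)"
  have a0: "a0 \<in> assignments p N" by (simp add: assignments_def tb a0_def)
  have Tup: "T_up p N a0 = {[]}" using tb by (auto simp: T_up_def valid_upper_def, auto simp: p_def)
  have vl: "valid_lower p t \<longleftrightarrow> t ! 0 = t ! 1" for t
    by (auto simp: valid_lower_def p_def)
  have Tlo: "T_lo p N a0 = (\<lambda>s. [s, s]) ` {1..N}"
    unfolding pair_img[symmetric] T_lo_def vl tb by (simp add: p_def numeral_2_eq_2)
  have T0: "T0_lo p N = {t \<in> labelings N 2. t ! 0 \<noteq> t ! 1}"
    unfolding T0_lo_def vl by (simp add: p_def numeral_2_eq_2)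
  have lm: "lo_mono p u [i, j] [s, s] = cpow c1 (u i s) * cpow c2 (u j s)" for s
    by (simp add: lo_mono_M p_def)
  have ups: "(\<Sum>t\<in>T_up p N a0. up_mono p u t []) = 1"
    unfolding Tup by (simp add: up_mono_def p_def)
  have los: "(\<Sum>t'\<in>T_lo p N a0. lo_mono p u [i, j] t') = (\<Sum>s\<in>{1..N}. cpow c1 (u i s) * cpow c2 (u j s))"
    unfolding Tlo sum_pair_img by (simp only: lm)
  show ?thesis
  proof (cases "i = j")
    case True
    have "[i, j] \<in> T_lo p N a0" using True i by (simp add: Tlo)
    moreover have "[] \<in> T_up p N a0" by (simp add: Tup)
    ultimately have "(\<Sum>t\<in>T_up p N a0. up_mono p u t []) = (\<Sum>t'\<in>T_lo p N a0. lo_mono p u [i, j] t')"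
      using R a0 unfolding R_Gr_def p_def[symmetric] by blast
    then show ?thesis using ups los True by simp
  next
    case False
    have "[i, j] \<in> T0_lo p N" using False i j by (simp add: T0 lab2)
    then have "(\<Sum>t'\<in>T_lo p N a0. lo_mono p u [i, j] t') = 0"
      using R a0 unfolding R_Gr_def p_def[symmetric] by blast
    then show ?thesis using los False by simp
  qed
qed

lemma up_pair:
  fixes u :: "nat \<Rightarrow> nat \<Rightarrow> 'a::unital_cstar_algebra"
  assumes R: "R_Gr N (TCP [c1, c2] [] {{Inl 0, Inl 1}}) u" and i: "i \<in> {1..N}" and j: "j \<in> {1..N}"
  shows "(\<Sum>s\<in>{1..N}. cpow c1 (u s i) * cpow c2 (u s j)) = (if i = j then 1 else 0)"
proof -
  define p where "p = TCP [c1, c2] [] {{Inl 0, Inl 1}}"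
  have tb: "through_blocks p = {}" by (auto simp: through_blocks_def p_def)
  define a0 :: "(nat + nat) set \<Rightarrow> nat" where "a0 = (\<lambda>_. undefined)"
  have a0: "a0 \<in> assignments p N" by (simp add: assignments_def tb a0_def)
  have Tlo: "T_lo p N a0 = {[]}" using tb by (auto simp: T_lo_def valid_lower_def, auto simp: p_def)
  have vl: "valid_upper p t \<longleftrightarrow> t ! 0 = t ! 1" for t
    by (auto simp: valid_upper_def p_def)
  have Tup: "T_up p N a0 = (\<lambda>s. [s, s]) ` {1..N}"
    unfolding pair_img[symmetric] T_up_def vl tb by (simp add: p_def numeral_2_eq_2)
  have T0: "T0_up p N = {t \<in> labelings N 2. t ! 0 \<noteq> t ! 1}"
    unfolding T0_up_def vl by (simp add: p_def numeral_2_eq_2)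
  have um: "up_mono p u [s, s] [i, j] = cpow c1 (u s i) * cpow c2 (u s j)" for s
    by (simp add: up_mono_M p_def)
  have los: "(\<Sum>t\<in>T_lo p N a0. lo_mono p u [] t) = 1"
    unfolding Tlo by (simp add: lo_mono_def p_def)
  have ups: "(\<Sum>t\<in>T_up p N a0. up_mono p u t [i, j]) = (\<Sum>s\<in>{1..N}. cpow c1 (u s i) * cpow c2 (u s j))"
    unfolding Tup sum_pair_img by (simp only: um)
  show ?thesis
  proof (cases "i = j")
    case True
    have "[i, j] \<in> T_up p N a0" using True i by (simp add: Tup)
    moreover have "[] \<in> T_lo p N a0" by (simp add: Tlo)
    ultimately have "(\<Sum>t\<in>T_up p N a0. up_mono p u t [i, j]) = (\<Sum>t'\<in>T_lo p N a0. lo_mono p u [] t')"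
      using R a0 unfolding R_Gr_def p_def[symmetric] by blast
    then show ?thesis using ups los True by simp
  next
    case False
    have "[i, j] \<in> T0_up p N" using False i j by (simp add: T0 lab2)
    then have "(\<Sum>t\<in>T_up p N a0. up_mono p u t [i, j]) = 0"
      using R a0 unfolding R_Gr_def p_def[symmetric] by blast
    then show ?thesis using ups False by simp
  qed
qed

theorem theorem4p6:
  fixes N :: nat and Parts :: "tcpart set"
    and u :: "nat \<Rightarrow> nat \<Rightarrow> 'a::unital_cstar_algebra"
  assumes "1 \<le> N"
    and "\<forall>p\<in>Parts. wf_tcpart p"
    and "mixed_pair_partitions \<subseteq> Parts"
    and "\<forall>p\<in>Parts. R_Gr N p u"
  shows "\<forall>p\<in>Parts. R_Sp N p (\<lambda>i. u i 1)"
proof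
  fix p assume p: "p \<in> Parts"
  have mp: "R_Gr N q u" if "q \<in> mixed_pair_partitions" for q
    using assms(3,4) that by blast
  have uc: "unit_ctx N u"
  proof
    fix i j assume i: "i \<in> {1..N}" and j: "j \<in> {1..N}"
    show "(\<Sum>s\<in>{1..N}. u i s * adj (u j s)) = (if i = j then 1 else 0)"
      using lo_pair[OF mp i j, of White Black] by (simp add: mixed_pair_partitions_def cpow_def)
    show "(\<Sum>s\<in>{1..N}. adj (u i s) * u j s) = (if i = j then 1 else 0)"
      using lo_pair[OF mp i j, of Black White] by (simp add: mixed_pair_partitions_def cpow_def)
    show "(\<Sum>s\<in>{1..N}. u s i * adj (u s j)) = (if i = j then 1 else 0)"
      using up_pair[OF mp i j, of White Black] by (simp add: mixed_pair_partitions_def cpow_def)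
    show "(\<Sum>s\<in>{1..N}. adj (u s i) * u s j) = (if i = j then 1 else 0)"
      using up_pair[OF mp i j, of Black White] by (simp add: mixed_pair_partitions_def cpow_def)
  qed
  interpret mainctx N u p
    by (rule mainctx.intro[OF uc]) (unfold_locales, use assms p in auto)
  show "R_Sp N p (\<lambda>i. u i 1)" by (rule main)
qed


end
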